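(* There exists a dynamical system $(X,T)$ which is totally transitive and transitive compact but not weakly mixing.
   Context: A dynamical system $(X,T)$: $X$ is a compact metric space with more than one point and without isolated points, $T:X\to X$ a continuous surjection. "Opene" means open and nonempty. $N_T(U,V)=\{n\in\mathbb{Z}_+:U\cap T^{-n}V\neq\varnothing\}$. $(X,T)$ is transitive if $N_T(U,V)\ne\varnothing$ for all opene $U,V$; totally transitive if $(X,T^k)$ is transitive for every $k\in\mathbb{N}$; weakly mixing if $(X\times X,T\times T)$ is transitive. $\mathcal{N}_T$ is the family of all subsets of $\mathbb{Z}_+$ containing some $N_T(U,V)$ with $U,V$ opene; $\omega_{\mathcal{N}_T}(x)=\bigcap_{F\in\mathcal{N}_T}\overline{\{T^ix:i\in F\}}$. $(X,T)$ is transitive compact if $\omega_{\mathcal{N}_T}(x)\neq\varnothing$ for all $x\in X$. *)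

theory Defs
  imports "HOL-Analysis.Analysis"
begin

definition dyn_system :: "'a set \<Rightarrow> ('a \<Rightarrow> 'a \<Rightarrow> real) \<Rightarrow> ('a \<Rightarrow> 'a) \<Rightarrow> bool" where
  "dyn_system X d T \<longleftrightarrow>
     Metric_space X d \<and>
     compact_space (Metric_space.mtopology X d) \<and>
     (\<exists>x\<in>X. \<exists>y\<in>X. x \<noteq> y) \<and>
     (\<forall>x\<in>X. \<forall>U. openin (Metric_space.mtopology X d) U \<and> x \<in> U \<longrightarrow> (\<exists>y\<in>U. y \<noteq> x)) \<and>
     continuous_map (Metric_space.mtopology X d) (Metric_space.mtopology X d) T \<and>
     T ` X = X"

definition hit_times :: "('a \<Rightarrow> 'a) \<Rightarrow> 'a set \<Rightarrow> 'a set \<Rightarrow> nat set" where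
  "hit_times T U V = {n. \<exists>x\<in>U. (T ^^ n) x \<in> V}"

definition opene :: "'a topology \<Rightarrow> 'a set \<Rightarrow> bool" where
  "opene tp U \<longleftrightarrow> openin tp U \<and> U \<noteq> {}"

definition top_transitive :: "'a topology \<Rightarrow> ('a \<Rightarrow> 'a) \<Rightarrow> bool" where
  "top_transitive tp T \<longleftrightarrow>
     (\<forall>U V. opene tp U \<and> opene tp V \<longrightarrow> hit_times T U V \<noteq> {})"

definition totally_transitive :: "'a topology \<Rightarrow> ('a \<Rightarrow> 'a) \<Rightarrow> bool" where
  "totally_transitive tp T \<longleftrightarrow> (\<forall>k::nat. k \<ge> 1 \<longrightarrow> top_transitive tp (T ^^ k))"

definition weakly_mixing :: "'a topology \<Rightarrow> ('a \<Rightarrow> 'a) \<Rightarrow> bool" where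
  "weakly_mixing tp T \<longleftrightarrow>
     top_transitive (prod_topology tp tp) (\<lambda>(x, y). (T x, T y))"

definition hit_family :: "'a topology \<Rightarrow> ('a \<Rightarrow> 'a) \<Rightarrow> nat set set" where
  "hit_family tp T = {F. \<exists>U V. opene tp U \<and> opene tp V \<and> hit_times T U V \<subseteq> F}"

definition omega_family :: "'a topology \<Rightarrow> ('a \<Rightarrow> 'a) \<Rightarrow> 'a \<Rightarrow> 'a set" where
  "omega_family tp T x =
     (\<Inter>F\<in>hit_family tp T. tp closure_of {(T ^^ i) x | i. i \<in> F})"

definition transitive_compact :: "'a topology \<Rightarrow> ('a \<Rightarrow> 'a) \<Rightarrow> bool" where
  "transitive_compact tp T \<longleftrightarrow> (\<forall>x\<in>topspace tp. omega_family tp T x \<noteq> {})"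

end

theory Submission
  imports Defs
begin

definition bb :: "nat \<Rightarrow> int" where "bb i = 10^(i+1) * fact (i+1) + 1"

lemma bb_ge: "bb i \<ge> 11"
proof -
  have "(10::int)^i \<ge> 1" by simp
  then have a: "(10::int)^(i+1) \<ge> 10" by simp
  have b: "(fact (i+1) :: int) \<ge> 1" by (rule fact_ge_1)
  have "(10::int)^(i+1) * (fact (i+1) :: int) \<ge> 10 * 1" using a b by (rule mult_mono) auto
  then show ?thesis unfolding bb_def by simp
qed

lemma bb_growth: "bb (Suc i) \<ge> 10 * bb i"
proof -
  define F where "F = (fact (i+1) :: int)"
  define G where "G = (fact (Suc i+1) :: int)"
  define Q where "Q = (10::int)^(i+1)"
  have F1: "F \<ge> 1" unfolding F_def by (rule fact_ge_1)
  have e: "Suc i + 1 = Suc (i+1)" by simp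
  have GF: "G = of_nat (Suc (i+1)) * F" unfolding F_def G_def by (simp only: e fact_Suc)
  have s2: "(of_nat (Suc (i+1)) :: int) \<ge> 2" by simp
  have "2 * F \<le> of_nat (Suc (i+1)) * F" using s2 F1 by (intro mult_right_mono) auto
  then have G1: "G \<ge> F + 1" using GF F1 by linarith
  have Q1: "Q \<ge> 1" unfolding Q_def by (rule one_le_power) simp
  have b1: "bb i = Q * F + 1" unfolding bb_def Q_def F_def by simp
  have b2: "bb (Suc i) = (10 * Q) * G + 1" unfolding bb_def Q_def G_def by (simp only: power_Suc e)
  have "(10 * Q) * (F + 1) \<le> (10 * Q) * G" using G1 Q1 by (intro mult_left_mono) auto
  then have "10 * Q * F + 10 * Q \<le> (10 * Q) * G" by (simp add: distrib_left)
  then show ?thesis using b1 b2 Q1 by linarith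
qed

lemma bb_mono: "i \<le> j \<Longrightarrow> bb i \<le> bb j"
proof (induction j)
  case 0 then show ?case by simp
next
  case (Suc j)
  then show ?case using bb_growth[of j] bb_ge[of j] by (cases "i = Suc j") auto
qed

lemma bb_gt: "bb t > int t"
proof (induction t)
  case 0 then show ?case using bb_ge[of 0] by simp
next
  case (Suc t) then show ?case using bb_growth[of t] bb_ge[of t] by simp
qed

lemma bb_sum: "9 * (\<Sum>i<u. bb i) \<le> bb u"
proof (induction u)
  case 0 then show ?case using bb_ge[of 0] by simp
next
  case (Suc u) then show ?case using bb_growth[of u] by simp
qed

lemma bb_dvd: "1 \<le> k \<Longrightarrow> k \<le> i \<Longrightarrow> int k dvd (bb i - 1)"
proof -
  assume "1 \<le> k" "k \<le> i"
  then have "k dvd fact (i+1)" by (intro dvd_fact) auto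
  then have "int k dvd int (fact (i+1))" by (simp only: int_dvd_int_iff)
  then have "int k dvd (fact (i+1) :: int)" by (simp only: of_nat_fact)
  then have "int k dvd 10^(i+1) * (fact (i+1) :: int)" by (rule dvd_mult)
  moreover have "bb i - 1 = 10^(i+1) * (fact (i+1) :: int)" by (simp add: bb_def)
  ultimately show ?thesis by simp
qed

lemma small_sum:
  assumes "\<And>i. \<bar>c i\<bar> \<le> 4"
  shows "2 * \<bar>\<Sum>i<u. c i * bb i\<bar> < bb u"
proof -
  have "\<bar>\<Sum>i<u. c i * bb i\<bar> \<le> (\<Sum>i<u. \<bar>c i * bb i\<bar>)" by (rule sum_abs)
  also have "\<dots> \<le> (\<Sum>i<u. 4 * bb i)"
  proof (rule sum_mono)
    fix i
    have "\<bar>bb i\<bar> = bb i" using bb_ge[of i] by simp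
    then have "\<bar>c i * bb i\<bar> = \<bar>c i\<bar> * bb i" by (simp add: abs_mult)
    also have "\<dots> \<le> 4 * bb i" using assms[of i] bb_ge[of i] by (intro mult_right_mono) auto
    finally show "\<bar>c i * bb i\<bar> \<le> 4 * bb i" .
  qed
  also have "\<dots> = 4 * (\<Sum>i<u. bb i)" by (simp add: sum_distrib_left)
  finally show ?thesis using bb_sum[of u] bb_ge[of u] by linarith
qed

lemma absh: "(a::int) \<le> \<bar>y\<bar> \<Longrightarrow> 2*\<bar>x\<bar> < a \<Longrightarrow> t \<le> a \<Longrightarrow> t < 2*\<bar>x + y\<bar>"
  by (cases "x \<ge> 0"; cases "y \<ge> 0"; cases "x+y \<ge> 0"; simp)

lemma big_digit:
  assumes "\<And>i. \<bar>c i\<bar> \<le> 4" "\<And>i. i \<ge> K \<Longrightarrow> c i = 0" "t \<le> j" "c j \<noteq> 0"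
  shows "bb t < 2 * \<bar>\<Sum>i<K. c i * bb i\<bar>"
  using assms(2)
proof (induction K)
  case 0 then show ?case using assms(4) by auto
next
  case (Suc K)
  show ?case
  proof (cases "c K = 0")
    case True
    then have "\<And>i. i \<ge> K \<Longrightarrow> c i = 0" using Suc.prems by (metis le_eq_less_or_eq Suc_le_eq)
    then show ?thesis using Suc.IH True by simp
  next
    case False
    have "j \<le> K" using Suc.prems[of j] assms(4) by (metis not_less_eq_eq)
    then have "bb t \<le> bb K" using assms(3) bb_mono by simp
    have s: "2 * \<bar>\<Sum>i<K. c i * bb i\<bar> < bb K" by (rule small_sum[OF assms(1)])
    have c1: "\<bar>c K\<bar> \<ge> 1" using False by (cases "c K > 0") auto
    have "\<bar>bb K\<bar> = bb K" using bb_ge[of K] by simp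
    then have "\<bar>c K * bb K\<bar> = \<bar>c K\<bar> * bb K" by (simp add: abs_mult)
    moreover have "1 * bb K \<le> \<bar>c K\<bar> * bb K" using c1 bb_ge[of K] by (intro mult_right_mono) auto
    ultimately have h: "\<bar>c K * bb K\<bar> \<ge> bb K" by simp
    have "(\<Sum>i<Suc K. c i * bb i) = (\<Sum>i<K. c i * bb i) + c K * bb K" by simp
    then show ?thesis using absh[OF h s \<open>bb t \<le> bb K\<close>] by simp
  qed
qed

lemma zero_val:
  assumes "\<And>i. \<bar>c i\<bar> \<le> 4" "\<And>i. i \<ge> K \<Longrightarrow> c i = 0" "(\<Sum>i<K. c i * bb i) = 0"
  shows "c j = 0"
proof (rule ccontr)
  assume "c j \<noteq> 0"
  then have "bb 0 < 2 * \<bar>\<Sum>i<K. c i * bb i\<bar>" by (intro big_digit[OF assms(1,2)]) auto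
  then show False using assms(3) bb_ge[of 0] by simp
qed

definition rep :: "(nat \<Rightarrow> int) \<Rightarrow> int \<Rightarrow> bool" where
  "rep e x \<longleftrightarrow> (\<forall>i. \<bar>e i\<bar> \<le> 1) \<and> (\<exists>K. (\<forall>i\<ge>K. e i = 0) \<and> x = (\<Sum>i<K. e i * bb i))"

definition Pint :: "int \<Rightarrow> bool" where "Pint x \<longleftrightarrow> x > 0 \<and> (\<exists>e. rep e x)"

definition Pn :: "nat set" where "Pn = {n. Pint (int n)}"

definition allowed :: "nat set \<Rightarrow> bool" where
  "allowed X \<longleftrightarrow> (\<forall>x\<in>X. \<forall>y\<in>X. x < y \<longrightarrow> y - x \<in> Pn)"

lemma sum_ext:
  assumes "\<And>i. i \<ge> K \<Longrightarrow> e i = 0" "K \<le> K'"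
  shows "(\<Sum>i<K'. e i * bb i) = (\<Sum>i<K. e i * bb i)"
proof -
  have "(\<Sum>i<K'. e i * bb i) = (\<Sum>i<K. e i * bb i) + (\<Sum>i\<in>{K..<K'}. e i * bb i)"
    using assms(2) by (metis lessThan_atLeast0 sum.atLeastLessThan_concat zero_le)
  moreover have "(\<Sum>i\<in>{K..<K'}. e i * bb i) = 0" using assms(1) by (intro sum.neutral) auto
  ultimately show ?thesis by simp
qed

lemma rep_fin: "rep e x \<Longrightarrow> \<exists>K. \<forall>i\<ge>K. e i = 0"
  unfolding rep_def by blast

lemma rep_bound: "rep e x \<Longrightarrow> \<bar>e i\<bar> \<le> 1"
  unfolding rep_def by blast

lemma rep_val:
  assumes "rep e x" "\<And>i. i \<ge> K \<Longrightarrow> e i = 0"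
  shows "x = (\<Sum>i<K. e i * bb i)"
proof -
  obtain K0 where K0: "\<forall>i\<ge>K0. e i = 0" "x = (\<Sum>i<K0. e i * bb i)" using assms(1) unfolding rep_def by blast
  have "(\<Sum>i<max K K0. e i * bb i) = (\<Sum>i<K0. e i * bb i)" using K0(1) by (intro sum_ext) auto
  moreover have "(\<Sum>i<max K K0. e i * bb i) = (\<Sum>i<K. e i * bb i)" using assms(2) by (intro sum_ext) auto
  ultimately show ?thesis using K0(2) by simp
qed

lemma rep_intro:
  assumes "\<And>i. \<bar>e i\<bar> \<le> 1" "\<And>i. i \<ge> K \<Longrightarrow> e i = 0" "x = (\<Sum>i<K. e i * bb i)"
  shows "rep e x"
  unfolding rep_def using assms by blast

lemma rep_zero: "rep (\<lambda>_. 0) 0"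
  unfolding rep_def by auto

lemma rep_diff:
  assumes "rep e x" "rep g y" "rep h (x - y)"
  shows "e i - g i = h i"
proof -
  obtain K1 where K1: "\<forall>i\<ge>K1. e i = 0" using rep_fin[OF assms(1)] by blast
  obtain K2 where K2: "\<forall>i\<ge>K2. g i = 0" using rep_fin[OF assms(2)] by blast
  obtain K3 where K3: "\<forall>i\<ge>K3. h i = 0" using rep_fin[OF assms(3)] by blast
  define K where "K = max K1 (max K2 K3)"
  have x: "x = (\<Sum>i<K. e i * bb i)" using K1 by (intro rep_val[OF assms(1)]) (auto simp: K_def)
  have y: "y = (\<Sum>i<K. g i * bb i)" using K2 by (intro rep_val[OF assms(2)]) (auto simp: K_def)
  have z: "x - y = (\<Sum>i<K. h i * bb i)" using K3 by (intro rep_val[OF assms(3)]) (auto simp: K_def)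
  have "(\<Sum>i<K. (e i - g i - h i) * bb i) = (\<Sum>i<K. e i * bb i) - (\<Sum>i<K. g i * bb i) - (\<Sum>i<K. h i * bb i)"
    by (simp add: left_diff_distrib sum_subtractf)
  also have "\<dots> = 0" using x y z by simp
  finally have S: "(\<Sum>i<K. (e i - g i - h i) * bb i) = 0" .
  have "(\<lambda>i. e i - g i - h i) i = 0"
  proof (rule zero_val[where K=K])
    fix i show "\<bar>e i - g i - h i\<bar> \<le> 4"
      using rep_bound[OF assms(1), of i] rep_bound[OF assms(2), of i] rep_bound[OF assms(3), of i] by linarith
  next
    fix i assume "K \<le> i" then show "e i - g i - h i = 0" using K1 K2 K3 by (simp add: K_def)
  next
    show "(\<Sum>i<K. (e i - g i - h i) * bb i) = 0" by (rule S)
  qed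
  then show ?thesis by simp
qed

lemma rep_unique: "rep e x \<Longrightarrow> rep g x \<Longrightarrow> e i = g i"
  using rep_diff[of e x g x "\<lambda>_. 0"] rep_zero by simp

lemma not_P1: "\<not> Pint 1"
proof
  assume "Pint 1"
  then obtain e where e: "rep e 1" unfolding Pint_def by blast
  obtain K where K: "\<forall>i\<ge>K. e i = 0" using rep_fin[OF e] by blast
  have v: "1 = (\<Sum>i<K. e i * bb i)" using K by (intro rep_val[OF e]) auto
  show False
  proof (cases "\<exists>j. e j \<noteq> 0")
    case True
    then obtain j where "e j \<noteq> 0" by blast
    have "bb 0 < 2 * \<bar>\<Sum>i<K. e i * bb i\<bar>"
    proof (rule big_digit[where t=0 and j=j])
      fix i show "\<bar>e i\<bar> \<le> 4" using rep_bound[OF e, of i] by linarith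
    next
      fix i assume "K \<le> i" then show "e i = 0" using K by simp
    qed (use \<open>e j \<noteq> 0\<close> in auto)
    then show False using v bb_ge[of 0] by simp
  next
    case False
    then show False using v by simp
  qed
qed

lemma no_consec: "Pint x \<Longrightarrow> \<not> Pint (x + 1)"
proof
  assume "Pint x" "Pint (x+1)"
  then obtain e g where e: "rep e x" and g: "rep g (x+1)" unfolding Pint_def by blast
  obtain K1 where K1: "\<forall>i\<ge>K1. e i = 0" using rep_fin[OF e] by blast
  obtain K2 where K2: "\<forall>i\<ge>K2. g i = 0" using rep_fin[OF g] by blast
  define K where "K = max K1 K2"
  have x: "x = (\<Sum>i<K. e i * bb i)" using K1 by (intro rep_val[OF e]) (auto simp: K_def)
  have y: "x + 1 = (\<Sum>i<K. g i * bb i)" using K2 by (intro rep_val[OF g]) (auto simp: K_def)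
  have v: "1 = (\<Sum>i<K. (g i - e i) * bb i)" using x y by (simp add: algebra_simps sum_subtractf)
  show False
  proof (cases "\<exists>j. g j - e j \<noteq> 0")
    case True
    then obtain j where j: "g j - e j \<noteq> 0" by blast
    have "bb 0 < 2 * \<bar>\<Sum>i<K. (g i - e i) * bb i\<bar>"
    proof (rule big_digit[where t=0 and j=j])
      fix i show "\<bar>g i - e i\<bar> \<le> 4" using rep_bound[OF e, of i] rep_bound[OF g, of i] by linarith
    next
      fix i assume "K \<le> i" then show "g i - e i = 0" using K1 K2 by (simp add: K_def)
    qed (use j in auto)
    then show False using v bb_ge[of 0] by simp
  next
    case False
    then show False using v by simp
  qed
qed

lemma allowed_rep:
  assumes "allowed X" "x0 \<in> X" "\<forall>x\<in>X. x0 \<le> x" "x \<in> X"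
  shows "\<exists>e. rep e (int x - int x0)"
proof (cases "x = x0")
  case True then show ?thesis using rep_zero by auto
next
  case False
  have "x0 \<le> x" using assms(3,4) by blast
  then have "x0 < x" using False by simp
  then have "x - x0 \<in> Pn" using assms unfolding allowed_def by blast
  then have "Pint (int (x - x0))" unfolding Pn_def by simp
  then show ?thesis unfolding Pint_def using \<open>x0 < x\<close> by (simp add: of_nat_diff)
qed

lemma spread:
  assumes "allowed X" "x0 \<in> X" "\<forall>x\<in>X. x0 \<le> x" "x \<in> X" "y \<in> X"
    "rep e (int x - int x0)" "rep g (int y - int x0)"
  shows "\<bar>e i - g i\<bar> \<le> 1"
proof -
  have main: "\<bar>e' i - g' i\<bar> \<le> 1" if "x' \<in> X" "y' \<in> X" "x' < y'"
    "rep e' (int x' - int x0)" "rep g' (int y' - int x0)" for x' y' e' g'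
  proof -
    have "y' - x' \<in> Pn" using assms(1) that unfolding allowed_def by blast
    then obtain h where h: "rep h (int (y' - x'))" unfolding Pn_def Pint_def by auto
    have "int (y' - x') = (int y' - int x0) - (int x' - int x0)" using that(3) by (simp add: of_nat_diff)
    then have "rep h ((int y' - int x0) - (int x' - int x0))" using h by simp
    then have "g' i - e' i = h i" by (rule rep_diff[OF that(5) that(4)])
    then show ?thesis using rep_bound[OF h, of i] by linarith
  qed
  show ?thesis
  proof (cases x y rule: linorder_cases)
    case less then show ?thesis using main[OF assms(4,5) less assms(6,7)] by simp
  next
    case equal then show ?thesis using rep_unique[OF assms(6), of g i] assms(7) by simp
  next
    case greater then show ?thesis using main[OF assms(5,4) greater assms(7,6)] by simp
  qed
qed

lemma finite_bound:
  fixes f :: "'b \<Rightarrow> nat \<Rightarrow> int"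
  assumes "finite I" "\<forall>x\<in>I. \<exists>K. \<forall>i\<ge>K. f x i = (0::int)"
  shows "\<exists>K. \<forall>x\<in>I. \<forall>i\<ge>K. f x i = 0"
  using assms
proof (induction rule: finite_induct)
  case empty then show ?case by simp
next
  case (insert y F)
  have "\<forall>x\<in>F. \<exists>K. \<forall>i\<ge>K. f x i = 0" using insert.prems by simp
  then obtain K1 where K1: "\<forall>x\<in>F. \<forall>i\<ge>K1. f x i = 0" using insert.IH by presburger
  have "\<exists>K. \<forall>i\<ge>K. f y i = 0" using insert.prems by simp
  then obtain K2 where K2: "\<forall>i\<ge>K2. f y i = 0" by presburger
  show ?case
  proof (rule exI[of _ "max K1 K2"], intro ballI allI impI)
    fix x i assume x: "x \<in> insert y F" and i: "max K1 K2 \<le> i"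
    then have "K1 \<le> i" "K2 \<le> i" by auto
    then show "f x i = 0" using K1 K2 x by auto
  qed
qed

lemma pos_top:
  assumes "\<And>i. \<bar>w i\<bar> \<le> 4" "w tp = 1"
  shows "bb tp < 2 * (\<Sum>i<Suc tp. w i * bb i)"
proof -
  have "2 * \<bar>\<Sum>i<tp. w i * bb i\<bar> < bb tp" by (rule small_sum[OF assms(1)])
  moreover have "(\<Sum>i<Suc tp. w i * bb i) = (\<Sum>i<tp. w i * bb i) + bb tp" using assms(2) by simp
  ultimately show ?thesis by linarith
qed

lemma lin2: "(a::int) < 2 * x \<Longrightarrow> x \<le> q \<Longrightarrow> a < 2 * q"
  by linarith

lemma lin3: "2 * (q + m + 1) < (a::int) \<Longrightarrow> a < 2 * q \<Longrightarrow> 0 \<le> m \<Longrightarrow> False"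
  by arith

lemma nu_bound:
  fixes al be :: int and pA mA pB mB :: bool
  assumes "\<bar>al\<bar> \<le> 1" "\<bar>be\<bar> \<le> 1"
    "al = 1 \<Longrightarrow> pA" "al = -1 \<Longrightarrow> mA" "be = 1 \<Longrightarrow> pB" "be = -1 \<Longrightarrow> mB"
    "\<not> (pA \<and> mA)" "\<not> (pB \<and> mB)"
  shows "\<bar>(if pA then 1 else 0) + (if mB then 1 else 0) - 1 + be - al\<bar> \<le> 1"
proof -
  have "al \<in> {-1,0,1}" "be \<in> {-1,0,1}" using assms(1,2) by auto
  then show ?thesis using assms(3-8) by (cases pA; cases mA; cases pB; cases mB) auto
qed

lemma master_ne:
  fixes A B S :: "nat set" and k L M :: nat
  assumes A: "finite A" "A \<noteq> {}" "allowed A" and B: "finite B" "B \<noteq> {}" "allowed B"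
    and S: "allowed S" and k: "k \<ge> 1"
  shows "\<exists>N::nat. M \<le> N \<and> k dvd N \<and> (\<forall>a\<in>A. \<forall>b\<in>B. Pint (int N + int b - int a)) \<and> (\<forall>j\<le>L. N + j \<notin> S)"
proof -
  define a0 where "a0 = Min A"
  define b0 where "b0 = Min B"
  have a0: "a0 \<in> A" "\<forall>a\<in>A. a0 \<le> a" using A by (auto simp: a0_def)
  have b0: "b0 \<in> B" "\<forall>b\<in>B. b0 \<le> b" using B by (auto simp: b0_def)
  define al where "al a = (SOME e. rep e (int a - int a0))" for a
  define be where "be b = (SOME e. rep e (int b - int b0))" for b
  have al: "rep (al a) (int a - int a0)" if "a \<in> A" for a
    unfolding al_def using allowed_rep[OF A(3) a0 that] by (rule someI_ex)
  have be: "rep (be b) (int b - int b0)" if "b \<in> B" for b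
    unfolding be_def using allowed_rep[OF B(3) b0 that] by (rule someI_ex)
  have "\<forall>a\<in>A. \<exists>K. \<forall>i\<ge>K. al a i = 0"
  proof
    fix a assume "a \<in> A" then show "\<exists>K. \<forall>i\<ge>K. al a i = 0" by (rule rep_fin[OF al])
  qed
  then obtain K1 where K1: "\<forall>a\<in>A. \<forall>i\<ge>K1. al a i = 0"
    using finite_bound[OF A(1), of al] by presburger
  have "\<forall>b\<in>B. \<exists>K. \<forall>i\<ge>K. be b i = 0"
  proof
    fix b assume "b \<in> B" then show "\<exists>K. \<forall>i\<ge>K. be b i = 0" by (rule rep_fin[OF be])
  qed
  then obtain K2 where K2: "\<forall>b\<in>B. \<forall>i\<ge>K2. be b i = 0"
    using finite_bound[OF B(1), of be] by presburger
  define K where "K = max K1 K2"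
  have alK: "al a i = 0" if "a \<in> A" "K \<le> i" for a i
  proof -
    have "K1 \<le> i" using that(2) unfolding K_def by simp
    then show ?thesis using K1 that(1) by blast
  qed
  have beK: "be b i = 0" if "b \<in> B" "K \<le> i" for b i
  proof -
    have "K2 \<le> i" using that(2) unfolding K_def by simp
    then show ?thesis using K2 that(1) by blast
  qed
  define s0 where "s0 = (LEAST s. s \<in> S)"
  have s0: "s0 \<in> S" "\<forall>s\<in>S. s0 \<le> s" if Sne0: "S \<noteq> {}"
  proof -
    obtain x where "x \<in> S" using Sne0 by blast
    then show "s0 \<in> S" unfolding s0_def by (rule LeastI)
    show "\<forall>s\<in>S. s0 \<le> s" unfolding s0_def by (intro ballI Least_le)
  qed
  define sg where "sg s = (SOME e. rep e (int s - int s0))" for s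
  have sg: "rep (sg s) (int s - int s0)" if "s \<in> S" for s
  proof -
    have ne: "S \<noteq> {}" using that by blast
    show ?thesis unfolding sg_def using allowed_rep[OF S s0(1)[OF ne] s0(2)[OF ne] that] by (rule someI_ex)
  qed
  define nu where "nu i = (if i < K then (if \<exists>a\<in>A. al a i = 1 then 1 else 0) + (if \<exists>b\<in>B. be b i = -1 then 1 else 0) - 1 else (0::int))" for i
  define c where "c = int a0 - int b0"
  define R where "R = \<bar>c\<bar> + int L + int s0 + int M + 1"
  define t where "t = K + k + nat (2 * R)"
  have tK: "K \<le> t" and tk: "k \<le> t" unfolding t_def by auto
  have Rpos: "R \<ge> 1" unfolding R_def by simp
  have "int t \<ge> 2 * R" unfolding t_def using Rpos by simp
  then have bbt: "bb t > 2 * R" using bb_gt[of t] by linarith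
  define ep where "ep = (if S \<noteq> {} \<and> (\<exists>s\<in>S. sg s t = 1) then -1 else (1::int))"
  define X0 where "X0 = (\<Sum>i<K. nu i * bb i) + ep * bb t + c"
  define h where "h = int k - X0 mod int k"
  have kpos: "(0::int) < int k" using k by simp
  have "0 \<le> X0 mod int k" "X0 mod int k < int k" using pos_mod_sign[OF kpos] pos_mod_bound[OF kpos] by auto
  then have h1: "1 \<le> h" "h \<le> int k" unfolding h_def by linarith+
  define hn where "hn = nat h"
  have hn: "1 \<le> hn" "int hn = h" using h1 unfolding hn_def by auto
  define mu where "mu i = nu i + (if i = t then ep else 0) + (if t < i \<and> i \<le> t + hn then 1 else 0)" for i
  define KK where "KK = Suc (t + hn)"
  define Nint where "Nint = X0 + (\<Sum>i\<in>{t<..t+hn}. bb i)"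
  have nu0: "nu i = 0" if "K \<le> i" for i using that unfolding nu_def by simp
  have nub: "\<bar>nu i\<bar> \<le> 1" for i unfolding nu_def by auto
  have epb: "ep = 1 \<or> ep = -1" unfolding ep_def by auto
  have mub: "\<bar>mu i\<bar> \<le> 3" for i using nub[of i] epb unfolding mu_def by auto
  have mu0: "mu i = 0" if "KK \<le> i" for i using that nu0[of i] tK unfolding mu_def KK_def by auto
  have mut: "mu t = ep" using nu0[OF tK] unfolding mu_def by simp
  have mutop: "mu (t + hn) = 1" using nu0[of "t+hn"] tK hn unfolding mu_def by simp
  have sumnu: "(\<Sum>i<KK. nu i * bb i) = (\<Sum>i<K. nu i * bb i)"
    using nu0 tK by (intro sum_ext) (auto simp: KK_def)
  have sumep: "(\<Sum>i<KK. (if i = t then ep else 0) * bb i) = ep * bb t"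
  proof -
    have "(\<Sum>i<KK. (if i = t then ep else 0) * bb i) = (\<Sum>i<KK. if i = t then ep * bb i else 0)"
      by (intro sum.cong) auto
    also have "\<dots> = ep * bb t" by (subst sum.delta) (auto simp: KK_def)
    finally show ?thesis .
  qed
  have sumtop: "(\<Sum>i<KK. (if t < i \<and> i \<le> t + hn then 1 else 0) * bb i) = (\<Sum>i\<in>{t<..t+hn}. bb i)"
  proof -
    have "(\<Sum>i<KK. (if t < i \<and> i \<le> t + hn then 1 else 0) * bb i) = (\<Sum>i<KK. if t < i \<and> i \<le> t + hn then bb i else 0)"
      by (intro sum.cong) auto
    also have "\<dots> = (\<Sum>i\<in>{i\<in>{..<KK}. t < i \<and> i \<le> t + hn}. bb i)"
      by (rule sum.inter_filter[symmetric]) simp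
    also have "{i\<in>{..<KK}. t < i \<and> i \<le> t + hn} = {t<..t+hn}" by (auto simp: KK_def)
    finally show ?thesis .
  qed
  have summu: "(\<Sum>i<KK. mu i * bb i) = Nint - c"
  proof -
    have "(\<Sum>i<KK. mu i * bb i) = (\<Sum>i<KK. nu i * bb i) + (\<Sum>i<KK. (if i = t then ep else 0) * bb i)
        + (\<Sum>i<KK. (if t < i \<and> i \<le> t + hn then 1 else 0) * bb i)"
      unfolding mu_def by (simp add: distrib_right sum.distrib)
    then show ?thesis using sumnu sumep sumtop unfolding Nint_def X0_def by simp
  qed
  have dvdN: "int k dvd Nint"
  proof -
    have e1: "(\<Sum>i\<in>{t<..t+hn}. bb i) = (\<Sum>i\<in>{t<..t+hn}. (bb i - 1)) + int hn"
      by (simp add: sum_subtractf)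
    have d1: "int k dvd (\<Sum>i\<in>{t<..t+hn}. (bb i - 1))"
      by (rule dvd_sum) (use k tk bb_dvd in auto)
    have "X0 + int hn = int k + int k * (X0 div int k)" using hn(2) unfolding h_def
      by (simp add: minus_mod_eq_mult_div[symmetric])
    then have d2: "int k dvd X0 + int hn" by simp
    have "Nint = (X0 + int hn) + (\<Sum>i\<in>{t<..t+hn}. (bb i - 1))"
      unfolding Nint_def using e1 by simp
    then show ?thesis using d1 d2 by simp
  qed
  have big: "bb t < 2 * (Nint - c)"
  proof -
    have "bb (t + hn) < 2 * (\<Sum>i<Suc (t+hn). mu i * bb i)"
    proof (rule pos_top)
      fix i show "\<bar>mu i\<bar> \<le> 4" using mub[of i] by linarith
    qed (rule mutop)
    moreover have "bb t \<le> bb (t + hn)" by (rule bb_mono) simp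
    ultimately show ?thesis using summu unfolding KK_def by simp
  qed
  have NM1: "Nint - c > \<bar>c\<bar> + int L + int s0 + int M + 1" using big bbt unfolding R_def by arith
  have NM2: "int L \<ge> 0" "int s0 \<ge> 0" "c + \<bar>c\<bar> \<ge> 0" by auto
  have NM: "Nint > int M" using NM1 NM2 by linarith
  define N where "N = nat Nint"
  have NN: "int N = Nint" using NM unfolding N_def by simp
  have part1: "Pint (int N + int b - int a)" if a: "a \<in> A" and b: "b \<in> B" for a b
  proof -
    define w where "w i = mu i + be b i - al a i" for i
    have wb: "\<bar>w i\<bar> \<le> 1" for i
    proof (cases "i < K")
      case True
      then have mi: "mu i = nu i" using tK unfolding mu_def by auto
      have exA: "\<not> ((\<exists>a\<in>A. al a i = 1) \<and> (\<exists>a\<in>A. al a i = -1))"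
      proof
        assume "(\<exists>a\<in>A. al a i = 1) \<and> (\<exists>a\<in>A. al a i = -1)"
        then obtain x y where "x \<in> A" "y \<in> A" "al x i = 1" "al y i = -1" by blast
        with spread[OF A(3) a0 _ _ al al, of x y i] show False by simp
      qed
      have exB: "\<not> ((\<exists>b\<in>B. be b i = 1) \<and> (\<exists>b\<in>B. be b i = -1))"
      proof
        assume "(\<exists>b\<in>B. be b i = 1) \<and> (\<exists>b\<in>B. be b i = -1)"
        then obtain x y where "x \<in> B" "y \<in> B" "be x i = 1" "be y i = -1" by blast
        with spread[OF B(3) b0 _ _ be be, of x y i] show False by simp
      qed
      have "\<bar>(if \<exists>a\<in>A. al a i = 1 then 1 else 0) + (if \<exists>b\<in>B. be b i = -1 then 1 else 0) - 1 + be b i - al a i\<bar> \<le> 1"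
        by (rule nu_bound[OF rep_bound[OF al[OF a]] rep_bound[OF be[OF b]] _ _ _ _ exA exB]) (use a b in auto)
      then show ?thesis using True mi unfolding w_def nu_def by simp
    next
      case False
      then have "al a i = 0" "be b i = 0" using alK[OF a] beK[OF b] by auto
      moreover have "\<bar>mu i\<bar> \<le> 1" using False nu0[of i] epb unfolding mu_def by auto
      ultimately show ?thesis unfolding w_def by simp
    qed
    have w0: "w i = 0" if "KK \<le> i" for i
      using that mu0[OF that] alK[OF a, of i] beK[OF b, of i] tK unfolding w_def KK_def by auto
    have va: "int a - int a0 = (\<Sum>i<KK. al a i * bb i)"
      by (rule rep_val[OF al[OF a]]) (use alK[OF a] tK in \<open>auto simp: KK_def\<close>)
    have vb: "int b - int b0 = (\<Sum>i<KK. be b i * bb i)"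
      by (rule rep_val[OF be[OF b]]) (use beK[OF b] tK in \<open>auto simp: KK_def\<close>)
    have vw: "(\<Sum>i<KK. w i * bb i) = int N + int b - int a"
    proof -
      have "(\<Sum>i<KK. w i * bb i) = (\<Sum>i<KK. mu i * bb i) + (\<Sum>i<KK. be b i * bb i) - (\<Sum>i<KK. al a i * bb i)"
        unfolding w_def by (simp add: algebra_simps sum.distrib sum_subtractf)
      then show ?thesis using summu va vb NN unfolding c_def by simp
    qed
    have wtop: "w (t + hn) = 1" using mutop alK[OF a, of "t+hn"] beK[OF b, of "t+hn"] tK unfolding w_def by simp
    have "bb (t+hn) < 2 * (\<Sum>i<Suc (t+hn). w i * bb i)"
    proof (rule pos_top)
      fix i show "\<bar>w i\<bar> \<le> 4" using wb[of i] by linarith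
    qed (rule wtop)
    then have pos: "int N + int b - int a > 0" using vw bb_ge[of "t+hn"] unfolding KK_def by simp
    have "rep w (int N + int b - int a)" by (rule rep_intro[OF wb w0 vw[symmetric]])
    then show ?thesis unfolding Pint_def using pos by blast
  qed
  have part2: "N + j \<notin> S" if j: "j \<le> L" for j
  proof
    assume sS: "N + j \<in> S"
    then have Sne: "S \<noteq> {}" by blast
    define s where "s = N + j"
    have rs: "rep (sg s) (int s - int s0)" using sg sS unfolding s_def by blast
    obtain K3 where K3: "\<forall>i\<ge>K3. sg s i = 0" using rep_fin[OF rs] by blast
    define K4 where "K4 = max KK K3"
    have v1: "int s - int s0 = (\<Sum>i<K4. sg s i * bb i)"
      by (rule rep_val[OF rs]) (use K3 in \<open>auto simp: K4_def\<close>)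
    have v2: "(\<Sum>i<K4. mu i * bb i) = Nint - c"
      using summu mu0 by (subst sum_ext[where K=KK]) (auto simp: K4_def)
    have v3: "(\<Sum>i<K4. (sg s i - mu i) * bb i) = c + int j - int s0"
    proof -
      have "(\<Sum>i<K4. (sg s i - mu i) * bb i) = (\<Sum>i<K4. sg s i * bb i) - (\<Sum>i<K4. mu i * bb i)"
        by (simp add: left_diff_distrib sum_subtractf)
      then show ?thesis using v1 v2 NN unfolding s_def by simp
    qed
    have eqt: "sg s t = ep"
    proof (rule ccontr)
      assume "sg s t \<noteq> ep"
      then have ne: "sg s t - mu t \<noteq> 0" using mut by simp
      have "bb t < 2 * \<bar>\<Sum>i<K4. (sg s i - mu i) * bb i\<bar>"
      proof (rule big_digit[where j=t])
        fix i show "\<bar>sg s i - mu i\<bar> \<le> 4" using rep_bound[OF rs, of i] mub[of i] by linarith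
      next
        fix i assume "K4 \<le> i" then show "sg s i - mu i = 0" using K3 mu0[of i] by (simp add: K4_def)
      qed (use ne in auto)
      then have X: "bb t < 2 * \<bar>c + int j - int s0\<bar>" using v3 by simp
      have Y: "\<bar>c + int j - int s0\<bar> \<le> \<bar>c\<bar> + int L + int s0" using j by linarith
      have Z: "int M \<ge> 0" by simp
      have X': "bb t < 2 * (\<bar>c\<bar> + int L + int s0)" by (rule lin2[OF X Y])
      show False by (rule lin3[OF _ X' Z]) (use bbt in \<open>simp add: R_def\<close>)
    qed
    show False
    proof (cases "\<exists>s'\<in>S. sg s' t = 1")
      case True
      then obtain s' where s': "s' \<in> S" "sg s' t = 1" by blast
      have "ep = -1" using True Sne unfolding ep_def by simp
      then have "\<bar>sg s' t - sg s t\<bar> \<le> 1 \<Longrightarrow> False" using eqt s'(2) by simp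
      moreover have "\<bar>sg s' t - sg s t\<bar> \<le> 1"
        by (rule spread[OF S s0[OF Sne] s'(1) _ sg[OF s'(1)] rs]) (use sS in \<open>simp add: s_def\<close>)
      ultimately show False by blast
    next
      case False
      then have "ep = 1" unfolding ep_def by auto
      then show False using False eqt sS unfolding s_def by blast
    qed
  qed
  have "M \<le> N" using NM NN by simp
  moreover have "k dvd N" using dvdN NN by (metis int_dvd_int_iff)
  ultimately show ?thesis using part1 part2 by blast
qed


lemma allowed_single: "allowed {x}"
  unfolding allowed_def by auto

lemma master:
  fixes A B S :: "nat set" and k L M :: nat
  assumes A: "finite A" "allowed A" and B: "finite B" "allowed B"
    and S: "allowed S" and k: "k \<ge> 1"
  shows "\<exists>N::nat. M \<le> N \<and> k dvd N \<and> (\<forall>a\<in>A. \<forall>b\<in>B. Pint (int N + int b - int a)) \<and> (\<forall>j\<le>L. N + j \<notin> S)"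
proof -
  define A' where "A' = (if A = {} then {0} else A)"
  define B' where "B' = (if B = {} then {0} else B)"
  have A': "finite A'" "A' \<noteq> {}" "allowed A'" "A \<subseteq> A'" using A allowed_single unfolding A'_def by auto
  have B': "finite B'" "B' \<noteq> {}" "allowed B'" "B \<subseteq> B'" using B allowed_single unfolding B'_def by auto
  obtain N where N: "M \<le> N" "k dvd N" "\<forall>a\<in>A'. \<forall>b\<in>B'. Pint (int N + int b - int a)" "\<forall>j\<le>L. N + j \<notin> S"
    using master_ne[OF A'(1-3) B'(1-3) S k, of M L] by blast
  show ?thesis using N A'(4) B'(4) by blast
qed

definition enc :: "nat set \<Rightarrow> real" where "enc = (SOME f. inj f)"

lemma inj_enc: "inj enc"
proof -
  have "\<exists>f::nat set \<Rightarrow> real. inj f"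
    using nat_sets_lepoll_reals01 unfolding lepoll_def by blast
  then show ?thesis unfolding enc_def by (rule someI_ex)
qed

definition dec :: "real \<Rightarrow> nat set" where "dec = inv enc"

lemma dec_enc [simp]: "dec (enc S) = S"
  unfolding dec_def by (rule inv_f_f[OF inj_enc])

definition Sig :: "nat set set" where "Sig = {S. allowed S}"
definition XX :: "real set" where "XX = enc ` Sig"

definition agree :: "nat \<Rightarrow> nat set \<Rightarrow> nat set \<Rightarrow> bool" where
  "agree m S S' \<longleftrightarrow> (\<forall>i\<le>m. (i \<in> S) = (i \<in> S'))"

definition dd :: "real \<Rightarrow> real \<Rightarrow> real" where
  "dd x y = (if dec x = dec y then 0 else (1/2)^(LEAST n. (n \<in> dec x) \<noteq> (n \<in> dec y)))"

definition TT :: "real \<Rightarrow> real" where "TT x = enc {i. Suc i \<in> dec x}"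

lemma XX_dec: "x \<in> XX \<Longrightarrow> allowed (dec x)"
  unfolding XX_def Sig_def by auto

lemma XX_enc: "allowed S \<Longrightarrow> enc S \<in> XX"
  unfolding XX_def Sig_def by auto

lemma XX_eq: "x \<in> XX \<Longrightarrow> enc (dec x) = x"
  unfolding XX_def Sig_def by auto

lemma allowed_subset: "allowed S \<Longrightarrow> T \<subseteq> S \<Longrightarrow> allowed T"
  unfolding allowed_def by blast

lemma allowed_shift: "allowed S \<Longrightarrow> allowed {i. i + n \<in> S}"
  unfolding allowed_def
proof (intro ballI impI)
  fix x y assume S: "\<forall>x\<in>S. \<forall>y\<in>S. x < y \<longrightarrow> y - x \<in> Pn" and x: "x \<in> {i. i + n \<in> S}"
    and y: "y \<in> {i. i + n \<in> S}" and xy: "x < y"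
  have "x + n \<in> S" "y + n \<in> S" "x + n < y + n" using x y xy by auto
  then have "(y + n) - (x + n) \<in> Pn" using S by blast
  then show "y - x \<in> Pn" by simp
qed

lemma dd_eq0: "dec x = dec y \<Longrightarrow> dd x y = 0"
  unfolding dd_def by simp

lemma dd_lt: "dd x y < (1/2)^m \<longleftrightarrow> agree m (dec x) (dec y)"
proof (cases "dec x = dec y")
  case True then show ?thesis unfolding dd_def agree_def by simp
next
  case False
  define n where "n = (LEAST n. (n \<in> dec x) \<noteq> (n \<in> dec y))"
  have ex: "\<exists>n. (n \<in> dec x) \<noteq> (n \<in> dec y)" using False by blast
  have nd: "(n \<in> dec x) \<noteq> (n \<in> dec y)" unfolding n_def using ex by (rule LeastI_ex)
  have nmin: "\<And>i. i < n \<Longrightarrow> (i \<in> dec x) = (i \<in> dec y)" unfolding n_def using not_less_Least by blast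
  have "dd x y = (1/2)^n" unfolding dd_def n_def using False by simp
  moreover have "((1/2::real)^n < (1/2)^m) \<longleftrightarrow> m < n" by (simp add: power_strict_decreasing_iff)
  moreover have "agree m (dec x) (dec y) \<longleftrightarrow> m < n"
  proof
    assume "agree m (dec x) (dec y)"
    then show "m < n" using nd unfolding agree_def by (meson not_less)
  next
    assume "m < n" then show "agree m (dec x) (dec y)" unfolding agree_def using nmin by auto
  qed
  ultimately show ?thesis by simp
qed

lemma dd_cases: "dd x y = 0 \<or> (\<exists>n. dd x y = (1/2)^n)"
  unfolding dd_def by auto

lemma dd_nonneg: "0 \<le> dd x y"
  unfolding dd_def by auto

lemma dd_comm: "dd x y = dd y x"
  unfolding dd_def by (auto simp: eq_commute)

lemma agree_trans: "agree m A B \<Longrightarrow> agree m B C \<Longrightarrow> agree m A C"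
  unfolding agree_def by auto

lemma dd_ultra: "dd x z \<le> max (dd x y) (dd y z)"
proof (rule ccontr)
  assume "\<not> ?thesis"
  then have lt: "dd x y < dd x z" "dd y z < dd x z" by auto
  then have "dd x z \<noteq> 0" using dd_nonneg[of x y] by auto
  then obtain n where n: "dd x z = (1/2)^n" using dd_cases[of x z] by blast
  have "agree n (dec x) (dec y)" "agree n (dec y) (dec z)" using lt n dd_lt by auto
  then have "dd x z < (1/2)^n" using dd_lt agree_trans by blast
  then show False using n by simp
qed

interpretation XM: Metric_space XX dd
proof
  fix x y show "0 \<le> dd x y" by (rule dd_nonneg)
next
  fix x y show "dd x y = dd y x" by (rule dd_comm)
next
  fix x y
  assume xy: "x \<in> XX" "y \<in> XX"
  show "dd x y = 0 \<longleftrightarrow> x = y"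
  proof
    assume "dd x y = 0"
    then have "dec x = dec y" unfolding dd_def by (cases "dec x = dec y") auto
    then show "x = y" using XX_eq[OF xy(1)] XX_eq[OF xy(2)] by metis
  next
    assume "x = y" then show "dd x y = 0" by (simp add: dd_eq0)
  qed
next
  fix x y z
  have u: "dd x z \<le> max (dd x y) (dd y z)" by (rule dd_ultra)
  have "0 \<le> dd x y" "0 \<le> dd y z" by (rule dd_nonneg)+
  then show "dd x z \<le> dd x y + dd y z" using u by (cases "dd x y \<le> dd y z") (simp_all add: max_def)
qed

lemma pow_small: "(0::real) < r \<Longrightarrow> \<exists>m. (1/2)^m < r"
  using real_arch_pow_inv[of r "1/2"] by auto

lemma mball_cyl: "XM.mball x ((1/2)^m) = {y \<in> XX. x \<in> XX \<and> agree m (dec x) (dec y)}"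
proof (rule set_eqI)
  fix y show "y \<in> XM.mball x ((1/2)^m) \<longleftrightarrow> y \<in> {y \<in> XX. x \<in> XX \<and> agree m (dec x) (dec y)}"
    unfolding XM.in_mball using dd_lt[of x y m] by blast
qed

lemma open_cyl:
  assumes "openin XM.mtopology U" "x \<in> U"
  shows "\<exists>m. \<forall>y\<in>XX. agree m (dec x) (dec y) \<longrightarrow> y \<in> U"
proof -
  obtain r where r: "r > 0" "XM.mball x r \<subseteq> U" using assms XM.openin_mtopology by blast
  obtain m where m: "(1/2)^m < r" using pow_small[OF r(1)] by blast
  have xX: "x \<in> XX" using assms XM.openin_mtopology by blast
  show ?thesis
  proof (intro exI ballI impI)
    fix y assume "y \<in> XX" "agree m (dec x) (dec y)"
    then have "dd x y < (1/2)^m" using dd_lt by blast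
    then have "y \<in> XM.mball x r" using xX \<open>y \<in> XX\<close> m by simp
    then show "y \<in> U" using r by blast
  qed
qed

lemma cyl_open: "x \<in> XX \<Longrightarrow> openin XM.mtopology {y \<in> XX. agree m (dec x) (dec y)}"
  using XM.openin_mball[of x "(1/2)^m"] mball_cyl[of x m] by simp

lemma coord_open: "openin XM.mtopology {y \<in> XX. i \<in> dec y}"
  unfolding XM.openin_mtopology
proof (intro conjI allI impI)
  fix y assume y: "y \<in> {y \<in> XX. i \<in> dec y}"
  show "\<exists>r>0. XM.mball y r \<subseteq> {y \<in> XX. i \<in> dec y}"
  proof (intro exI conjI)
    show "(0::real) < (1/2)^i" by simp
    show "XM.mball y ((1/2)^i) \<subseteq> {y \<in> XX. i \<in> dec y}"
      using y unfolding mball_cyl agree_def by auto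
  qed
qed auto

lemma TT_pow: "x \<in> XX \<Longrightarrow> (TT^^n) x = enc {i. i + n \<in> dec x}"
proof (induction n)
  case 0 then show ?case using XX_eq by simp
next
  case (Suc n)
  have "(TT^^Suc n) x = TT ((TT^^n) x)" by simp
  also have "\<dots> = enc {i. Suc i \<in> {i. i + n \<in> dec x}}" using Suc unfolding TT_def by simp
  also have "{i. Suc i \<in> {i. i + n \<in> dec x}} = {i. i + Suc n \<in> dec x}" by auto
  finally show ?case .
qed

lemma TT_powX: "x \<in> XX \<Longrightarrow> (TT^^n) x \<in> XX"
  using TT_pow XX_enc allowed_shift XX_dec by metis

lemma dec_TT_pow: "x \<in> XX \<Longrightarrow> dec ((TT^^n) x) = {i. i + n \<in> dec x}"
  using TT_pow by simp

lemma TT_one: "TT x = (TT^^1) x" by simp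

lemma TTX: "x \<in> XX \<Longrightarrow> TT x \<in> XX"
  using TT_powX[of x 1] by simp

lemma dec_TT: "x \<in> XX \<Longrightarrow> dec (TT x) = {i. Suc i \<in> dec x}"
  using dec_TT_pow[of x 1] by simp

lemma compact: "compact_space XM.mtopology"
  unfolding XM.compact_space_eq_mcomplete_mtotally_bounded
proof
  show "XM.mcomplete"
    unfolding XM.mcomplete_def
  proof (intro allI impI)
    fix \<sigma> assume C: "XM.MCauchy \<sigma>"
    have rng: "\<And>n. \<sigma> n \<in> XX" using C unfolding XM.MCauchy_def by auto
    have cau: "\<exists>N. \<forall>n n'. N \<le> n \<longrightarrow> N \<le> n' \<longrightarrow> dd (\<sigma> n) (\<sigma> n') < (1/2)^m" for m
      using C unfolding XM.MCauchy_def by simp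
    define Nf where "Nf m = (SOME N. \<forall>n n'. N \<le> n \<longrightarrow> N \<le> n' \<longrightarrow> dd (\<sigma> n) (\<sigma> n') < (1/2)^m)" for m
    have Nf: "agree m (dec (\<sigma> n)) (dec (\<sigma> n'))" if "Nf m \<le> n" "Nf m \<le> n'" for m n n'
    proof -
      have "\<forall>n n'. Nf m \<le> n \<longrightarrow> Nf m \<le> n' \<longrightarrow> dd (\<sigma> n) (\<sigma> n') < (1/2)^m"
        unfolding Nf_def using cau[of m] by (rule someI_ex)
      then show ?thesis using that dd_lt by blast
    qed
    define Lm where "Lm = {i. i \<in> dec (\<sigma> (Nf i))}"
    have mem: "(i \<in> dec (\<sigma> n)) = (i \<in> Lm)" if "Nf i \<le> n" for i n
      using Nf[OF that order.refl] unfolding agree_def Lm_def by auto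
    have aL: "allowed Lm"
      unfolding allowed_def
    proof (intro ballI impI)
      fix x y assume x: "x \<in> Lm" and y: "y \<in> Lm" and xy: "x < y"
      define n where "n = max (Nf x) (Nf y)"
      have "x \<in> dec (\<sigma> n)" "y \<in> dec (\<sigma> n)" using mem[of x n] mem[of y n] x y unfolding n_def by auto
      then show "y - x \<in> Pn" using XX_dec[OF rng[of n]] xy unfolding allowed_def by blast
    qed
    show "\<exists>x. limitin XM.mtopology \<sigma> x sequentially"
    proof (intro exI)
      show "limitin XM.mtopology \<sigma> (enc Lm) sequentially"
        unfolding XM.limit_metric_sequentially
      proof (intro conjI allI impI)
        show "enc Lm \<in> XX" by (rule XX_enc[OF aL])
        fix \<epsilon> :: real assume "\<epsilon> > 0"
        then obtain m where m: "(1/2)^m < \<epsilon>" using pow_small by blast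
        define N where "N = Max (Nf ` {..m})"
        have NfN: "Nf i \<le> N" if "i \<le> m" for i unfolding N_def using that by (intro Max_ge) auto
        show "\<exists>N. \<forall>n\<ge>N. \<sigma> n \<in> XX \<and> dd (\<sigma> n) (enc Lm) < \<epsilon>"
        proof (intro exI allI impI conjI)
          fix n assume "N \<le> n"
          show "\<sigma> n \<in> XX" by (rule rng)
          have "agree m (dec (\<sigma> n)) (dec (enc Lm))"
            unfolding agree_def
          proof (intro allI impI)
            fix i assume "i \<le> m"
            then have "Nf i \<le> n" using NfN \<open>N \<le> n\<close> le_trans by blast
            then show "(i \<in> dec (\<sigma> n)) = (i \<in> dec (enc Lm))" using mem by simp
          qed
          then have "dd (\<sigma> n) (enc Lm) < (1/2)^m" using dd_lt by blast
          then show "dd (\<sigma> n) (enc Lm) < \<epsilon>" using m by simp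
        qed
      qed
    qed
  qed
next
  show "XM.mtotally_bounded XX"
    unfolding XM.mtotally_bounded_def
  proof (intro allI impI)
    fix \<epsilon> :: real assume "\<epsilon> > 0"
    then obtain m where m: "(1/2)^m < \<epsilon>" using pow_small by blast
    define pat where "pat y = dec y \<inter> {..m}" for y
    define rp where "rp P = (SOME y. y \<in> XX \<and> pat y = P)" for P
    have rp: "rp (pat x) \<in> XX \<and> pat (rp (pat x)) = pat x" if "x \<in> XX" for x
      unfolding rp_def by (rule someI_ex) (use that in blast)
    have fin: "finite (pat ` XX)"
      by (rule finite_subset[of _ "Pow {..m}"]) (auto simp: pat_def)
    show "\<exists>K. finite K \<and> K \<subseteq> XX \<and> XX \<subseteq> (\<Union>x\<in>K. XM.mball x \<epsilon>)"
    proof (intro exI conjI)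
      show "finite (rp ` pat ` XX)" using fin by simp
      show "rp ` pat ` XX \<subseteq> XX" using rp by auto
      show "XX \<subseteq> (\<Union>x\<in>rp ` pat ` XX. XM.mball x \<epsilon>)"
      proof
        fix x assume x: "x \<in> XX"
        have "agree m (dec (rp (pat x))) (dec x)"
          using rp[OF x] unfolding agree_def pat_def by blast
        then have "dd (rp (pat x)) x < \<epsilon>" using dd_lt m by (meson less_trans)
        then have "x \<in> XM.mball (rp (pat x)) \<epsilon>" using rp[OF x] x by simp
        then show "x \<in> (\<Union>x\<in>rp ` pat ` XX. XM.mball x \<epsilon>)" using x by blast
      qed
    qed
  qed
qed

lemma cont: "continuous_map XM.mtopology XM.mtopology TT"
  unfolding XM.metric_continuous_map[OF XM.Metric_space_axioms]
proof (intro conjI ballI allI impI)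
  show "TT ` XX \<subseteq> XX" using TTX by auto
  fix a and \<epsilon> :: real assume a: "a \<in> XX" and e: "\<epsilon> > 0"
  obtain m where m: "(1/2)^m < \<epsilon>" using pow_small[OF e] by blast
  show "\<exists>\<delta>>0. \<forall>x. x \<in> XX \<and> dd a x < \<delta> \<longrightarrow> dd (TT a) (TT x) < \<epsilon>"
  proof (intro exI conjI allI impI)
    show "(0::real) < (1/2)^(Suc m)" by simp
    fix x assume x: "x \<in> XX \<and> dd a x < (1/2)^(Suc m)"
    then have "agree (Suc m) (dec a) (dec x)" using dd_lt by blast
    then have "agree m (dec (TT a)) (dec (TT x))"
      using dec_TT[OF a] dec_TT[of x] x unfolding agree_def by auto
    then have "dd (TT a) (TT x) < (1/2)^m" using dd_lt by blast
    then show "dd (TT a) (TT x) < \<epsilon>" using m by simp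
  qed
qed

lemma glue:
  assumes "allowed A" "\<forall>a\<in>A. a \<le> p" "allowed B" "p < N"
    "\<forall>a\<in>A. \<forall>b\<in>B. Pint (int N + int b - int a)"
  shows "allowed (A \<union> {i. N \<le> i \<and> i - N \<in> B})"
  unfolding allowed_def
proof (intro ballI impI)
  fix x y assume x: "x \<in> A \<union> {i. N \<le> i \<and> i - N \<in> B}" and y: "y \<in> A \<union> {i. N \<le> i \<and> i - N \<in> B}"
    and xy: "x < y"
  show "y - x \<in> Pn"
  proof (cases "x \<in> A")
    case xA: True
    show ?thesis
    proof (cases "y \<in> A")
      case True then show ?thesis using xA xy assms(1) unfolding allowed_def by blast
    next
      case False
      then have yB: "N \<le> y" "y - N \<in> B" using y by auto
      have "Pint (int N + int (y - N) - int x)" using assms(5) xA yB by blast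
      moreover have "int N + int (y - N) - int x = int (y - x)" using yB xy by (simp add: of_nat_diff)
      ultimately show ?thesis unfolding Pn_def by simp
    qed
  next
    case xn: False
    then have xB: "N \<le> x" "x - N \<in> B" using x by auto
    have "y \<notin> A" using assms(2,4) xB(1) xy by (meson le_trans less_imp_le_nat not_le order.strict_trans2)
    then have yB: "N \<le> y" "y - N \<in> B" using y by auto
    have "x - N < y - N" using xB yB xy by simp
    then have "(y - N) - (x - N) \<in> Pn" using assms(3) xB yB unfolding allowed_def by blast
    moreover have "(y - N) - (x - N) = y - x" using xB yB xy by simp
    ultimately show ?thesis by simp
  qed
qed

lemma core:
  assumes U: "openin XM.mtopology U" "x \<in> U" and V: "openin XM.mtopology V" "y \<in> V"
    and S: "allowed S" and k: "k \<ge> 1"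
  shows "\<exists>N. k dvd N \<and> N \<in> hit_times TT U V \<and> (\<forall>j\<le>L. N + j \<notin> S)"
proof -
  have xX: "x \<in> XX" and yX: "y \<in> XX" using U V XM.openin_mtopology by blast+
  obtain p where p: "\<forall>z\<in>XX. agree p (dec x) (dec z) \<longrightarrow> z \<in> U" using open_cyl[OF U] by blast
  obtain q where q: "\<forall>z\<in>XX. agree q (dec y) (dec z) \<longrightarrow> z \<in> V" using open_cyl[OF V] by blast
  define A where "A = dec x \<inter> {..p}"
  define B where "B = dec y \<inter> {..q}"
  have A: "finite A" "allowed A" unfolding A_def using allowed_subset[OF XX_dec[OF xX]] by auto
  have B: "finite B" "allowed B" unfolding B_def using allowed_subset[OF XX_dec[OF yX]] by auto
  obtain N where N: "Suc p \<le> N" "k dvd N" "\<forall>a\<in>A. \<forall>b\<in>B. Pint (int N + int b - int a)" "\<forall>j\<le>L. N + j \<notin> S"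
    using master[OF A B S k, of "Suc p" L] by blast
  define G where "G = A \<union> {i. N \<le> i \<and> i - N \<in> B}"
  have aG: "allowed G" unfolding G_def
    by (rule glue[OF A(2) _ B(2)]) (use N in \<open>auto simp: A_def\<close>)
  define z where "z = enc G"
  have zX: "z \<in> XX" unfolding z_def by (rule XX_enc[OF aG])
  have "agree p (dec x) (dec z)"
    unfolding agree_def z_def G_def A_def using N(1) by auto
  then have zU: "z \<in> U" using p zX by blast
  have "dec ((TT^^N) z) = {i. i + N \<in> G}" using dec_TT_pow[OF zX, of N] unfolding z_def by simp
  then have "agree q (dec y) (dec ((TT^^N) z))"
    unfolding agree_def G_def B_def A_def using N(1) by auto
  then have "(TT^^N) z \<in> V" using q TT_powX[OF zX] by blast
  then have "N \<in> hit_times TT U V" unfolding hit_times_def using zU by blast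
  then show ?thesis using N by blast
qed

lemma allowedD: "allowed S \<Longrightarrow> x \<in> S \<Longrightarrow> y \<in> S \<Longrightarrow> x < y \<Longrightarrow> y - x \<in> Pn"
  unfolding allowed_def by blast

lemma allowed_empty: "allowed {}" unfolding allowed_def by simp

lemma no_iso:
  assumes x: "x \<in> XX" and U: "openin XM.mtopology U" "x \<in> U"
  shows "\<exists>y\<in>U. y \<noteq> x"
proof -
  obtain m where m: "\<forall>z\<in>XX. agree m (dec x) (dec z) \<longrightarrow> z \<in> U" using open_cyl[OF U] by blast
  define A where "A = dec x \<inter> {..m}"
  have A: "finite A" "allowed A" unfolding A_def using allowed_subset[OF XX_dec[OF x]] by auto
  obtain N where N: "Suc m \<le> N" "1 dvd N" "\<forall>a\<in>A. \<forall>b\<in>{0}. Pint (int N + int b - int a)" "\<forall>j\<le>0. N + j \<notin> {}"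
    using master[OF A _ allowed_single[of 0] allowed_empty, where k=1 and M="Suc m" and L=0] by auto
  show ?thesis
  proof (cases "N \<in> dec x")
    case True
    define y where "y = enc (dec x - {N})"
    have yX: "y \<in> XX" unfolding y_def by (rule XX_enc, rule allowed_subset[OF XX_dec[OF x]]) auto
    have "agree m (dec x) (dec y)" unfolding agree_def y_def using N(1) by auto
    then have "y \<in> U" using m yX by blast
    moreover have "y \<noteq> x"
    proof
      assume "y = x" then have "dec y = dec x" by simp
      then show False using True unfolding y_def by auto
    qed
    ultimately show ?thesis by blast
  next
    case False
    define G where "G = A \<union> {i. N \<le> i \<and> i - N \<in> {0}}"
    have aG: "allowed G" unfolding G_def
      by (rule glue[OF A(2) _ allowed_single]) (use N in \<open>auto simp: A_def\<close>)
    define y where "y = enc G"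
    have yX: "y \<in> XX" unfolding y_def by (rule XX_enc[OF aG])
    have "agree m (dec x) (dec y)" unfolding agree_def y_def G_def A_def using N(1) by auto
    then have "y \<in> U" using m yX by blast
    moreover have "y \<noteq> x"
    proof
      assume "y = x" then have "dec y = dec x" by simp
      moreover have "N \<in> dec y" unfolding y_def G_def by simp
      ultimately show False using False by simp
    qed
    ultimately show ?thesis by blast
  qed
qed

lemma surj_TT: "TT ` XX = XX"
proof
  show "TT ` XX \<subseteq> XX" using TTX by auto
  show "XX \<subseteq> TT ` XX"
  proof
    fix x assume x: "x \<in> XX"
    define G where "G = {i. i \<noteq> 0 \<and> i - 1 \<in> dec x}"
    have aG: "allowed G"
      unfolding allowed_def
    proof (intro ballI impI)
      fix a b assume "a \<in> G" "b \<in> G" "a < b"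
      then have "a - 1 \<in> dec x" "b - 1 \<in> dec x" "a - 1 < b - 1" "a \<noteq> 0" unfolding G_def by auto
      then have "(b - 1) - (a - 1) \<in> Pn" using XX_dec[OF x] unfolding allowed_def by blast
      moreover have "(b - 1) - (a - 1) = b - a" using \<open>a - 1 < b - 1\<close> \<open>a \<noteq> 0\<close> by simp
      ultimately show "b - a \<in> Pn" by simp
    qed
    have gX: "enc G \<in> XX" by (rule XX_enc[OF aG])
    have e: "{i. Suc i \<in> G} = dec x" unfolding G_def by auto
    have "dec (TT (enc G)) = dec x" using dec_TT[OF gX] e by simp
    then have "TT (enc G) = x" using XX_eq[OF x] XX_eq[OF TTX[OF gX]] by metis
    then show "x \<in> TT ` XX" using gX by blast
  qed
qed

lemma prodpow: "((\<lambda>(x, y). (TT x, TT y)) ^^ n) (a, b) = ((TT^^n) a, (TT^^n) b)"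
  by (induction n) auto


lemma tot_trans: "totally_transitive XM.mtopology TT"
  unfolding totally_transitive_def top_transitive_def
proof (intro allI impI)
  fix k :: nat and U V assume k: "1 \<le> k" and UV: "opene XM.mtopology U \<and> opene XM.mtopology V"
  then obtain x y where x: "x \<in> U" and y: "y \<in> V" unfolding opene_def by blast
  have U: "openin XM.mtopology U" and V: "openin XM.mtopology V" using UV unfolding opene_def by auto
  obtain N where N: "k dvd N" "N \<in> hit_times TT U V" using core[OF U x V y allowed_empty k, of 0] by blast
  obtain n where n: "N = k * n" using N(1) by blast
  have "(TT ^^ k) ^^ n = TT ^^ N" unfolding n by (rule funpow_mult)
  then have "n \<in> hit_times (TT ^^ k) U V" using N(2) unfolding hit_times_def by simp
  then show "hit_times (TT ^^ k) U V \<noteq> {}" by blast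
qed

lemma trans_compact: "transitive_compact XM.mtopology TT"
  unfolding transitive_compact_def
proof (intro ballI)
  fix a assume "a \<in> topspace XM.mtopology"
  then have a: "a \<in> XX" by simp
  have e: "enc {} \<in> XX" by (rule XX_enc[OF allowed_empty])
  have "enc {} \<in> omega_family XM.mtopology TT a"
    unfolding omega_family_def
  proof (intro InterI, clarify)
    fix F assume "F \<in> hit_family XM.mtopology TT"
    then obtain U V where UV: "opene XM.mtopology U" "opene XM.mtopology V" "hit_times TT U V \<subseteq> F"
      unfolding hit_family_def by blast
    obtain x y where x: "x \<in> U" and y: "y \<in> V" using UV unfolding opene_def by blast
    have U: "openin XM.mtopology U" and V: "openin XM.mtopology V" using UV unfolding opene_def by auto
    show "enc {} \<in> XM.mtopology closure_of {(TT ^^ i) a |i. i \<in> F}"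
      unfolding in_closure_of
    proof (intro conjI allI impI)
      show "enc {} \<in> topspace XM.mtopology" using e by simp
      fix W assume W: "enc {} \<in> W \<and> openin XM.mtopology W"
      obtain L where L: "\<forall>z\<in>XX. agree L (dec (enc {})) (dec z) \<longrightarrow> z \<in> W"
        using open_cyl[of W "enc {}"] W by blast
      obtain N where N: "N \<in> hit_times TT U V" "\<forall>j\<le>L. N + j \<notin> dec a"
        using core[OF U x V y XX_dec[OF a], of 1 L] by auto
      have "agree L (dec (enc {})) (dec ((TT^^N) a))"
        unfolding agree_def dec_TT_pow[OF a] using N(2) by (auto simp: add.commute)
      then have "(TT^^N) a \<in> W" using L TT_powX[OF a] by blast
      moreover have "(TT^^N) a \<in> {(TT ^^ i) a |i. i \<in> F}" using N(1) UV(3) by blast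
      ultimately show "\<exists>y. y \<in> {(TT ^^ i) a |i. i \<in> F} \<and> y \<in> W" by blast
    qed
  qed
  then show "omega_family XM.mtopology TT a \<noteq> {}" by blast
qed

lemma not_wm: "\<not> weakly_mixing XM.mtopology TT"
proof
  define U1 where "U1 = {y \<in> XX. 0 \<in> dec y}"
  define V2 where "V2 = {y \<in> XX. 1 \<in> dec y}"
  have o1: "openin XM.mtopology U1" unfolding U1_def by (rule coord_open)
  have o2: "openin XM.mtopology V2" unfolding V2_def by (rule coord_open)
  have m1: "enc {0} \<in> U1" unfolding U1_def using XX_enc[OF allowed_single] by simp
  have m2: "enc {1} \<in> V2" unfolding V2_def using XX_enc[OF allowed_single] by simp
  assume "weakly_mixing XM.mtopology TT"
  then have tr: "top_transitive (prod_topology XM.mtopology XM.mtopology) (\<lambda>(x, y). (TT x, TT y))"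
    unfolding weakly_mixing_def .
  have "openin (prod_topology XM.mtopology XM.mtopology) (U1 \<times> U1)"
    using o1 by (simp only: openin_prod_Times_iff) simp
  moreover have "(enc {0}, enc {0}) \<in> U1 \<times> U1" by (rule SigmaI[OF m1 m1])
  ultimately have op1: "opene (prod_topology XM.mtopology XM.mtopology) (U1 \<times> U1)"
    unfolding opene_def by (metis empty_iff)
  have "openin (prod_topology XM.mtopology XM.mtopology) (U1 \<times> V2)"
    using o1 o2 by (simp only: openin_prod_Times_iff) simp
  moreover have "(enc {0}, enc {1}) \<in> U1 \<times> V2" by (rule SigmaI[OF m1 m2])
  ultimately have op2: "opene (prod_topology XM.mtopology XM.mtopology) (U1 \<times> V2)"
    unfolding opene_def by (metis empty_iff)
  have "hit_times (\<lambda>(x, y). (TT x, TT y)) (U1 \<times> U1) (U1 \<times> V2) \<noteq> {}"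
    using tr op1 op2 unfolding top_transitive_def by blast
  then obtain n where "n \<in> hit_times (\<lambda>(x, y). (TT x, TT y)) (U1 \<times> U1) (U1 \<times> V2)" by blast
  then have "\<exists>p\<in>U1 \<times> U1. ((\<lambda>(x, y). (TT x, TT y)) ^^ n) p \<in> U1 \<times> V2"
    unfolding hit_times_def by (simp only: mem_Collect_eq)
  then obtain p where p: "p \<in> U1 \<times> U1" "((\<lambda>(x, y). (TT x, TT y)) ^^ n) p \<in> U1 \<times> V2"
    by (elim bexE)
  obtain x y where xy: "p = (x, y)" by (cases p)
  have x: "x \<in> XX" "0 \<in> dec x" and y: "y \<in> XX" "0 \<in> dec y" using p(1) xy unfolding U1_def by auto
  have "((TT^^n) x, (TT^^n) y) \<in> U1 \<times> V2" using p(2) unfolding xy prodpow .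
  then have "(TT^^n) x \<in> U1" "(TT^^n) y \<in> V2" by auto
  then have "0 \<in> dec ((TT^^n) x)" "1 \<in> dec ((TT^^n) y)" unfolding U1_def V2_def by auto
  then have nx: "n \<in> dec x" and ny: "1 + n \<in> dec y" unfolding dec_TT_pow[OF x(1)] dec_TT_pow[OF y(1)] by auto
  have ax: "allowed (dec x)" and ay: "allowed (dec y)" using XX_dec x(1) y(1) by auto
  show False
  proof (cases "n = 0")
    case True
    then have "1 \<in> dec y" using ny by simp
    then have "1 - 0 \<in> Pn" using allowedD[OF ay y(2)] by simp
    then show False using not_P1 unfolding Pn_def by simp
  next
    case False
    then have "n - 0 \<in> Pn" using allowedD[OF ax x(2) nx] by simp
    moreover have "(1 + n) - 0 \<in> Pn" using allowedD[OF ay y(2) ny] by simp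
    ultimately have "Pint (int n)" "Pint (int n + 1)" unfolding Pn_def by (auto simp: add.commute)
    then show False using no_consec by blast
  qed
qed

theorem theorem6p1:
  shows "\<exists>(X :: real set) (d :: real \<Rightarrow> real \<Rightarrow> real) (T :: real \<Rightarrow> real).
           dyn_system X d T \<and>
           totally_transitive (Metric_space.mtopology X d) T \<and>
           transitive_compact (Metric_space.mtopology X d) T \<and>
           \<not> weakly_mixing (Metric_space.mtopology X d) T"
proof (intro exI conjI)
  show "dyn_system XX dd TT"
    unfolding dyn_system_def
  proof (intro conjI)
    show "Metric_space XX dd" by (rule XM.Metric_space_axioms)
    show "compact_space XM.mtopology" by (rule compact)
    have ne: "enc {} \<noteq> enc {0}"
    proof
      assume "enc {} = enc {0}"
      then have "dec (enc {}) = dec (enc {0})" by simp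
      then show False by simp
    qed
    have "enc {} \<in> XX" "enc {0} \<in> XX" using XX_enc[OF allowed_empty] XX_enc[OF allowed_single] by auto
    then show "\<exists>x\<in>XX. \<exists>y\<in>XX. x \<noteq> y" using ne by blast
    show "\<forall>x\<in>XX. \<forall>U. openin XM.mtopology U \<and> x \<in> U \<longrightarrow> (\<exists>y\<in>U. y \<noteq> x)"
      using no_iso by blast
    show "continuous_map XM.mtopology XM.mtopology TT" by (rule cont)
    show "TT ` XX = XX" by (rule surj_TT)
  qed
  show "totally_transitive XM.mtopology TT" by (rule tot_trans)
  show "transitive_compact XM.mtopology TT" by (rule trans_compact)
  show "\<not> weakly_mixing XM.mtopology TT" by (rule not_wm)
qed

end
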